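(* For all positive integers $k$ and $r$ there exists $q_0$ such that the following holds for every $q\ge q_0$. Let $\mathcal H$ be a 3-graph containing a copy $S$ of $S_q^3$, and suppose that to each of the $3q$ edges (2-subsets) $e$ contained in the hyperedges of $S$ an integer $w(e)$ with $0\le w(e)\le k$ is assigned such that $e$ is contained in at least $w(e)+1$ hyperedges of $\mathcal H$. Then some $r$ of the hyperedges of $S$ form a copy $S'$ of $S_r^3$ which is nice, i.e., for each edge $e$ contained in a hyperedge of $S'$, the link set of $e$ in $\mathcal H$ contains at least $w(e)$ vertices not belonging to $V(S')$.
   Context: $S_q^3$ denotes the 3-graph consisting of $q$ hyperedges that pairwise share exactly one common vertex (the center) and are otherwise disjoint. The link set of a pair $e=\{a,b\}$ in a 3-graph $\mathcal H$ is the set of vertices $c$ such that $\{a,b,c\}$ is a hyperedge of $\mathcal H$. *)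

theory Defs
  imports Main
begin

definition three_graph :: "'a set set \<Rightarrow> bool" where
  "three_graph H \<longleftrightarrow> finite H \<and> (\<forall>A\<in>H. card A = 3)"

definition is_star :: "'a set set \<Rightarrow> nat \<Rightarrow> bool" where
  "is_star S q \<longleftrightarrow> finite S \<and> card S = q \<and> (\<forall>A\<in>S. card A = 3) \<and>
     (\<exists>c. \<forall>A\<in>S. \<forall>B\<in>S. A \<noteq> B \<longrightarrow> A \<inter> B = {c})"

definition shadow2 :: "'a set set \<Rightarrow> 'a set set" where
  "shadow2 S = {e. card e = 2 \<and> (\<exists>A\<in>S. e \<subseteq> A)}"

definition link :: "'a set set \<Rightarrow> 'a set \<Rightarrow> 'a set" where
  "link H e = {c. c \<notin> e \<and> insert c e \<in> H}"

end

theory Submission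
  imports Defs
begin

lemma card_filter_sum:
  assumes "finite V"
  shows "card {y\<in>V. P y} = (\<Sum>y\<in>V. if P y then 1 else 0)"
  using sum.inter_filter[OF assms, of "\<lambda>_. (1::nat)" P] by simp

lemma low_vertex:
  fixes V :: "'a set"
  assumes fin: "finite V" and ne: "V \<noteq> {}" and out: "\<forall>x\<in>V. card {y\<in>V. R x y} \<le> d"
  shows "\<exists>x\<in>V. card {y\<in>V. R x y \<or> R y x} \<le> 2*d"
proof (rule ccontr)
  assume "\<not> ?thesis"
  hence big: "\<forall>x\<in>V. 2*d + 1 \<le> card {y\<in>V. R x y \<or> R y x}" by auto
  have "(2*d+1) * card V = (\<Sum>x\<in>V. 2*d+1)" by simp
  also have "\<dots> \<le> (\<Sum>x\<in>V. card {y\<in>V. R x y \<or> R y x})" by (rule sum_mono) (use big in auto)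
  also have "\<dots> \<le> (\<Sum>x\<in>V. card {y\<in>V. R x y} + card {y\<in>V. R y x})"
  proof (rule sum_mono)
    fix x assume "x \<in> V"
    have "{y\<in>V. R x y \<or> R y x} = {y\<in>V. R x y} \<union> {y\<in>V. R y x}" by auto
    thus "card {y\<in>V. R x y \<or> R y x} \<le> card {y\<in>V. R x y} + card {y\<in>V. R y x}"
      by (metis card_Un_le)
  qed
  also have "\<dots> = (\<Sum>x\<in>V. card {y\<in>V. R x y}) + (\<Sum>x\<in>V. card {y\<in>V. R y x})"
    by (rule sum.distrib)
  also have "(\<Sum>x\<in>V. card {y\<in>V. R y x}) = (\<Sum>x\<in>V. card {y\<in>V. R x y})"
  proof -
    have "(\<Sum>x\<in>V. card {y\<in>V. R y x}) = (\<Sum>x\<in>V. \<Sum>y\<in>V. if R y x then 1 else 0)"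
      using card_filter_sum[OF fin] by simp
    also have "\<dots> = (\<Sum>y\<in>V. \<Sum>x\<in>V. if R y x then 1 else 0)" by (rule sum.swap)
    also have "\<dots> = (\<Sum>y\<in>V. card {x\<in>V. R y x})"
      using card_filter_sum[OF fin] by simp
    finally show ?thesis .
  qed
  also have "(\<Sum>x\<in>V. card {y\<in>V. R x y}) \<le> (\<Sum>x\<in>V. d)" by (rule sum_mono) (use out in auto)
  finally have "(2*d+1) * card V \<le> 2 * (d * card V)" by simp
  moreover have "card V > 0" using fin ne by auto
  ultimately show False by (simp add: algebra_simps)
qed

lemma indep:
  fixes V :: "'a set"
  assumes "finite V" "\<forall>x\<in>V. card {y\<in>V. R x y} \<le> d" "(2*d+1)*r \<le> card V"
  shows "\<exists>I\<subseteq>V. card I = r \<and> (\<forall>x\<in>I. \<forall>y\<in>I. x\<noteq>y \<longrightarrow> \<not> R x y)"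
  using assms
proof (induction r arbitrary: V)
  case 0
  then show ?case by auto
next
  case (Suc r)
  have "V \<noteq> {}" using Suc.prems(3) by auto
  then obtain x where x: "x \<in> V" and lx: "card {y\<in>V. R x y \<or> R y x} \<le> 2*d"
    using low_vertex[OF Suc.prems(1) _ Suc.prems(2)] by blast
  define N where "N = insert x {y\<in>V. R x y \<or> R y x}"
  have NV: "N \<subseteq> V" using x by (auto simp: N_def)
  have cN: "card N \<le> 2*d+1" unfolding N_def
  proof -
    have "card (insert x {y\<in>V. R x y \<or> R y x}) \<le> Suc (card {y\<in>V. R x y \<or> R y x})"
      by (simp add: card_insert_if Suc.prems(1))
    thus "card (insert x {y\<in>V. R x y \<or> R y x}) \<le> 2*d+1" using lx by simp
  qed
  define V' where "V' = V - N"
  have fV': "finite V'" using Suc.prems(1) by (simp add: V'_def)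
  have cV': "card V' = card V - card N" unfolding V'_def
    using card_Diff_subset[OF finite_subset[OF NV Suc.prems(1)] NV] .
  have "(2*d+1)*r \<le> card V'" using cV' cN Suc.prems(3) by simp
  moreover have "\<forall>x\<in>V'. card {y\<in>V'. R x y} \<le> d"
  proof
    fix z assume "z \<in> V'"
    hence "z \<in> V" by (simp add: V'_def)
    have "card {y\<in>V'. R z y} \<le> card {y\<in>V. R z y}"
      by (rule card_mono) (use Suc.prems(1) in \<open>auto simp: V'_def\<close>)
    thus "card {y\<in>V'. R z y} \<le> d" using Suc.prems(2) \<open>z \<in> V\<close> by fastforce
  qed
  ultimately obtain I where I: "I \<subseteq> V'" "card I = r" "\<forall>x\<in>I. \<forall>y\<in>I. x\<noteq>y \<longrightarrow> \<not> R x y"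
    using Suc.IH[OF fV'] by blast
  have xI: "x \<notin> I" using I(1) by (auto simp: V'_def N_def)
  have fI: "finite I" using I(1) fV' finite_subset by blast
  show ?case
  proof (intro exI conjI)
    show "insert x I \<subseteq> V" using I(1) x by (auto simp: V'_def)
    show "card (insert x I) = Suc r" using xI fI I(2) by simp
    show "\<forall>a\<in>insert x I. \<forall>b\<in>insert x I. a \<noteq> b \<longrightarrow> \<not> R a b"
      using I(1,3) by (auto simp: V'_def N_def)
  qed
qed

lemma card3_finite: "card (A::'a set) = 3 \<Longrightarrow> finite A"
  by (rule card_ge_0_finite) simp

lemma three_graph_link_card:
  assumes tg: "three_graph H" and e2: "card e = 2"
  shows "finite (link H e) \<and> card {A\<in>H. e \<subseteq> A} \<le> card (link H e)"
proof
  have fH: "finite H" and c3: "\<forall>A\<in>H. card A = 3" using tg by (auto simp: three_graph_def)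
  have "link H e \<subseteq> \<Union>H" by (auto simp: link_def)
  moreover have "finite (\<Union>H)" using fH c3 card3_finite by blast
  ultimately show fl: "finite (link H e)" by (rule finite_subset)
  have "{A\<in>H. e \<subseteq> A} \<subseteq> (\<lambda>c. insert c e) ` link H e"
  proof
    fix A assume A: "A \<in> {A\<in>H. e \<subseteq> A}"
    hence AH: "A \<in> H" and eA: "e \<subseteq> A" by auto
    have cA: "card A = 3" using c3 AH by blast
    have fe: "finite e" using e2 by (intro card_ge_0_finite) simp
    have "card (A - e) = 1" using card_Diff_subset[OF fe eA] cA e2 by simp
    then obtain c where c: "A - e = {c}" using card_1_singletonE by blast
    hence "c \<notin> e" "A = insert c e" using eA by auto
    thus "A \<in> (\<lambda>c. insert c e) ` link H e" using AH by (auto simp: link_def)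
  qed
  hence "card {A\<in>H. e \<subseteq> A} \<le> card ((\<lambda>c. insert c e) ` link H e)"
    using fl by (intro card_mono) auto
  also have "\<dots> \<le> card (link H e)" by (rule card_image_le[OF fl])
  finally show "card {A\<in>H. e \<subseteq> A} \<le> card (link H e)" .
qed

lemma test32: "card {e. e \<subseteq> (A::'a set) \<and> card e = 2} = 3" if "card A = 3"
proof -
  have "finite A" using that card3_finite by blast
  from n_subsets[OF this, of 2] that show ?thesis by (simp add: choose_two)
qed


theorem lemma2:
  shows "\<forall>k::nat. \<forall>r::nat. k > 0 \<longrightarrow> r > 0 \<longrightarrow>
    (\<exists>q0::nat. \<forall>q\<ge>q0. \<forall>(H::nat set set) S (w::nat set \<Rightarrow> nat).
       three_graph H \<longrightarrow> S \<subseteq> H \<longrightarrow> is_star S q \<longrightarrow>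
       (\<forall>e\<in>shadow2 S. w e \<le> k \<and> card {A\<in>H. e \<subseteq> A} \<ge> w e + 1) \<longrightarrow>
       (\<exists>S'\<subseteq>S. is_star S' r \<and>
          (\<forall>e\<in>shadow2 S'. card (link H e - \<Union>S') \<ge> w e)))"
proof (intro allI impI)
  fix k r :: nat
  show "\<exists>q0::nat. \<forall>q\<ge>q0. \<forall>(H::nat set set) S (w::nat set \<Rightarrow> nat).
       three_graph H \<longrightarrow> S \<subseteq> H \<longrightarrow> is_star S q \<longrightarrow>
       (\<forall>e\<in>shadow2 S. w e \<le> k \<and> card {A\<in>H. e \<subseteq> A} \<ge> w e + 1) \<longrightarrow>
       (\<exists>S'\<subseteq>S. is_star S' r \<and>
          (\<forall>e\<in>shadow2 S'. card (link H e - \<Union>S') \<ge> w e))"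
  proof (rule exI[of _ "(2*(3*k)+1)*r"], intro allI impI)
    fix q :: nat and H :: "nat set set" and S :: "nat set set" and w :: "nat set \<Rightarrow> nat"
    assume q: "(2*(3*k)+1)*r \<le> q" and tg: "three_graph H" and SH: "S \<subseteq> H"
      and st: "is_star S q"
      and hw: "\<forall>e\<in>shadow2 S. w e \<le> k \<and> card {A\<in>H. e \<subseteq> A} \<ge> w e + 1"
    have fS: "finite S" and cS: "card S = q" and c3: "\<forall>A\<in>S. card A = 3"
      using st by (auto simp: is_star_def)
    obtain c where cen: "\<forall>A\<in>S. \<forall>B\<in>S. A \<noteq> B \<longrightarrow> A \<inter> B = {c}"
      using st by (auto simp: is_star_def)
    define E where "E A = {e. e \<subseteq> A \<and> card e = 2}" for A :: "nat set"
    define P where "P A e W \<longleftrightarrow> W \<subseteq> link H e - A \<and> card W = w e \<and> finite W" for A e W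
    have exW: "\<exists>W. P A e W" if A: "A \<in> S" and e: "e \<in> E A" for A e
    proof -
      have e2: "card e = 2" and eA: "e \<subseteq> A" using e by (auto simp: E_def)
      have esh: "e \<in> shadow2 S" using e2 eA A by (auto simp: shadow2_def)
      have fl: "finite (link H e)" and cl: "card {A\<in>H. e \<subseteq> A} \<le> card (link H e)"
        using three_graph_link_card[OF tg e2] by auto
      have wl: "w e + 1 \<le> card (link H e)" using hw esh cl by fastforce
      have fe: "finite e" using e2 by (intro card_ge_0_finite) simp
      have fA: "finite A" using c3 A card3_finite by blast
      have "card (A - e) = 1" using card_Diff_subset[OF fe eA] c3 A e2 by simp
      moreover have "link H e \<inter> A \<subseteq> A - e" by (auto simp: link_def)
      ultimately have "card (link H e \<inter> A) \<le> 1"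
        by (metis card_mono fA finite_Diff)
      moreover have "card (link H e - A) = card (link H e) - card (link H e \<inter> A)"
        by (rule card_Diff_subset_Int) (use fl in auto)
      ultimately have "w e \<le> card (link H e - A)" using wl by linarith
      then obtain W where "W \<subseteq> link H e - A" "card W = w e" "finite W"
        by (rule obtain_subset_with_card_n)
      thus ?thesis by (auto simp: P_def)
    qed
    define Wf where "Wf A e = (SOME W. P A e W)" for A e
    have Wf: "P A e (Wf A e)" if "A \<in> S" "e \<in> E A" for A e
      unfolding Wf_def using exW[OF that] by (rule someI_ex)
    define Bad where "Bad A = (\<Union>e\<in>E A. Wf A e)" for A
    define R where "R A B \<longleftrightarrow> B \<noteq> A \<and> B \<inter> Bad A \<noteq> {}" for A B
    have BadA: "Bad A \<inter> A = {}" if "A \<in> S" for A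
      using Wf[OF that] by (auto simp: Bad_def P_def)
    have fE: "finite (E A)" and cE: "card (E A) = 3" if "A \<in> S" for A
    proof -
      have fA: "finite A" using c3 that card3_finite by blast
      have "E A \<subseteq> Pow A" by (auto simp: E_def)
      thus "finite (E A)" using fA by (meson finite_Pow_iff finite_subset)
      show "card (E A) = 3" unfolding E_def using test32 c3 that by blast
    qed
    have fBad: "finite (Bad A)" if "A \<in> S" for A
      unfolding Bad_def proof (rule finite_UN_I[OF fE[OF that]])
      fix e assume "e \<in> E A" thus "finite (Wf A e)" using Wf[OF that] by (simp add: P_def)
    qed
    have cBad: "card (Bad A) \<le> 3*k" if A: "A \<in> S" for A
    proof -
      have "card (Bad A) \<le> (\<Sum>e\<in>E A. card (Wf A e))"
        unfolding Bad_def by (rule card_UN_le[OF fE[OF A]])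
      also have "\<dots> = (\<Sum>e\<in>E A. w e)"
      proof (rule sum.cong)
        fix e assume "e \<in> E A" thus "card (Wf A e) = w e" using Wf[OF A] by (simp add: P_def)
      qed simp
      also have "\<dots> \<le> (\<Sum>e\<in>E A. k)"
      proof (rule sum_mono)
        fix e assume "e \<in> E A"
        hence "e \<in> shadow2 S" using A unfolding E_def shadow2_def by blast
        thus "w e \<le> k" using hw by blast
      qed
      also have "\<dots> = 3*k" by (simp only: sum_constant cE[OF A] of_nat_id)
      finally show ?thesis .
    qed
    have outd: "\<forall>A\<in>S. card {B\<in>S. R A B} \<le> 3*k"
    proof
      fix A assume A: "A \<in> S"
      define f where "f B = (SOME v. v \<in> B \<inter> Bad A)" for B
      have fB: "f B \<in> B \<inter> Bad A" if "B \<in> {B\<in>S. R A B}" for B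
      proof -
        have "\<exists>v. v \<in> B \<inter> Bad A" using that unfolding R_def by blast
        thus ?thesis unfolding f_def by (rule someI_ex)
      qed
      have inj: "inj_on f {B\<in>S. R A B}"
      proof (rule inj_onI)
        fix B B' assume B: "B \<in> {B\<in>S. R A B}" and B': "B' \<in> {B\<in>S. R A B}" and eq: "f B = f B'"
        show "B = B'"
        proof (rule ccontr)
          assume ne: "B \<noteq> B'"
          have "f B \<in> B \<inter> B'" using fB[OF B] fB[OF B'] eq by auto
          moreover have "B \<inter> B' = {c}" using cen B B' ne by blast
          ultimately have "f B = c" by blast
          moreover have "B \<noteq> A" using B unfolding R_def by blast
          hence "A \<inter> B = {c}" using cen A B by blast
          hence "c \<in> A" by blast
          ultimately show False using fB[OF B] BadA[OF A] by blast
        qed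
      qed
      have sub: "f ` {B\<in>S. R A B} \<subseteq> Bad A" using fB by blast
      have "card {B\<in>S. R A B} \<le> card (Bad A)"
        by (rule card_inj_on_le[OF inj sub fBad[OF A]])
      thus "card {B\<in>S. R A B} \<le> 3*k" using cBad[OF A] by linarith
    qed
    have qS: "(2*(3*k)+1)*r \<le> card S" using q cS by (simp only:)
    obtain I where I: "I \<subseteq> S" "card I = r" "\<forall>x\<in>I. \<forall>y\<in>I. x\<noteq>y \<longrightarrow> \<not> R x y"
      using indep[OF fS outd qS] by blast
    show "\<exists>S'\<subseteq>S. is_star S' r \<and> (\<forall>e\<in>shadow2 S'. card (link H e - \<Union>S') \<ge> w e)"
    proof (intro exI conjI)
      show "I \<subseteq> S" by (rule I(1))
      have fI: "finite I" using I(1) fS by (rule finite_subset)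
      have "\<forall>A\<in>I. card A = 3" using I(1) c3 by blast
      moreover have "\<forall>A\<in>I. \<forall>B\<in>I. A \<noteq> B \<longrightarrow> A \<inter> B = {c}" using I(1) cen by blast
      ultimately show "is_star I r" unfolding is_star_def using fI I(2) by blast
      show "\<forall>e\<in>shadow2 I. w e \<le> card (link H e - \<Union>I)"
      proof
        fix e assume "e \<in> shadow2 I"
        then obtain A where A: "A \<in> I" and eA: "e \<subseteq> A" and e2: "card e = 2"
          by (auto simp: shadow2_def)
        have AS: "A \<in> S" using A I(1) by blast
        have eE: "e \<in> E A" using eA e2 by (auto simp: E_def)
        have P: "P A e (Wf A e)" by (rule Wf[OF AS eE])
        have fl: "finite (link H e)" using three_graph_link_card[OF tg e2] by auto
        have "Wf A e \<subseteq> link H e - \<Union>I"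
        proof
          fix x assume x: "x \<in> Wf A e"
          have xl: "x \<in> link H e" and xA: "x \<notin> A" using P x by (auto simp: P_def)
          have xB: "x \<in> Bad A" using x eE by (auto simp: Bad_def)
          have "x \<notin> B" if "B \<in> I" for B
          proof (cases "B = A")
            case True thus ?thesis using xA by simp
          next
            case False
            hence "\<not> R A B" using I(3) A that by metis
            thus ?thesis using False xB by (auto simp: R_def)
          qed
          thus "x \<in> link H e - \<Union>I" using xl by auto
        qed
        hence "card (Wf A e) \<le> card (link H e - \<Union>I)"
          by (rule card_mono[rotated]) (use fl in auto)
        thus "w e \<le> card (link H e - \<Union>I)" using P by (simp add: P_def)
      qed
    qed
  qed
qed

end
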